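(* Let $k\ge 3$ and $p=1+k+k(k-1)/2$. In the $k$-dimensional Poisson regression model with first-order interactions, let $\boldsymbol{\beta}$ have $\beta_0=0$, $\beta_1=\dots=\beta_k=-1$ and $\beta_{ij}=0$ for all $1\le i<j\le k$. Let $\mathbf{x}_0=(0,\dots,0)$, let $\mathbf{x}_i=2\mathbf{e}_i$ for $i=1,\dots,k$ (where $\mathbf{e}_i$ is the $i$-th unit vector), and let $\mathbf{x}_{ij}=\mathbf{x}_i+\mathbf{x}_j$ for $1\le i<j\le k$. Then the design which assigns equal weights $1/p$ to these $p$ settings is locally $D$-optimal at $\boldsymbol{\beta}$ on $\mathcal{X}=[0,\infty)^k$.
   Context: In the $k$-dimensional Poisson regression model with first-order interactions, an observation at $\mathbf{x}=(x_1,\dots,x_k)$ is Poisson distributed with mean $\lambda(\mathbf{x})=\exp(\mathbf{f}(\mathbf{x})^\top\boldsymbol{\beta})$, where $\mathbf{f}(\mathbf{x})=(1,x_1,\dots,x_k,(x_ix_j)_{1\le i<j\le k})^\top$, so $\mathbf{f}(\mathbf{x})^\top\boldsymbol{\beta}=\beta_0+\sum_j\beta_jx_j+\sum_{i<j}\beta_{ij}x_ix_j$. A design $\xi$ is a finite collection of distinct settings $\mathbf{x}_i\in\mathcal{X}$ with weights $w_i\ge0$ summing to $1$; its information matrix is $\mathbf{M}_{\boldsymbol{\beta}}(\xi)=\sum_i w_i\lambda(\mathbf{x}_i)\mathbf{f}(\mathbf{x}_i)\mathbf{f}(\mathbf{x}_i)^\top$. A design is locally $D$-optimal at $\boldsymbol{\beta}$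 on $\mathcal{X}$ if it maximizes $\det\mathbf{M}_{\boldsymbol{\beta}}(\xi)$ over all designs on $\mathcal{X}$. *)

theory Defs
  imports "HOL-Analysis.Analysis"
begin

text \<open>Points of the design space are vectors in \<open>real ^ 'n\<close>, so \<open>k = CARD('n)\<close>.
  The regression functions of the model with first-order interactions are indexed by the
  subsets \<open>S\<close> of the coordinate set with \<open>card S \<le> 2\<close>:
  \<open>S = {}\<close> gives the constant 1, \<open>S = {i}\<close> gives \<open>x_i\<close>, \<open>S = {i,j}\<close> (i \<noteq> j) gives \<open>x_i x_j\<close>.\<close>

definition idx :: "'n::finite set set" where
  "idx = {S. card S \<le> 2}"

definition regf :: "'n::finite set \<Rightarrow> real ^ 'n \<Rightarrow> real" where
  "regf S x = (\<Prod>i\<in>S. x $ i)"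

definition intensity :: "('n::finite set \<Rightarrow> real) \<Rightarrow> real ^ 'n \<Rightarrow> real" where
  "intensity \<beta> x = exp (\<Sum>S\<in>idx. \<beta> S * regf S x)"

definition info_matrix ::
  "('n::finite set \<Rightarrow> real) \<Rightarrow> (real ^ 'n) set \<Rightarrow> (real ^ 'n \<Rightarrow> real) \<Rightarrow> 'n set \<Rightarrow> 'n set \<Rightarrow> real" where
  "info_matrix \<beta> D w = (\<lambda>S T. \<Sum>x\<in>D. w x * intensity \<beta> x * regf S x * regf T x)"

definition det_on :: "'a set \<Rightarrow> ('a \<Rightarrow> 'a \<Rightarrow> real) \<Rightarrow> real" where
  "det_on I A = (\<Sum>\<pi>\<in>{\<pi>. \<pi> permutes I}. of_int (sign \<pi>) * (\<Prod>i\<in>I. A i (\<pi> i)))"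

definition is_design :: "(real ^ 'n) set \<Rightarrow> (real ^ 'n) set \<Rightarrow> (real ^ 'n \<Rightarrow> real) \<Rightarrow> bool" where
  "is_design X D w \<longleftrightarrow> finite D \<and> D \<subseteq> X \<and> (\<forall>x\<in>D. w x \<ge> 0) \<and> sum w D = 1"

definition locally_D_optimal ::
  "('n::finite set \<Rightarrow> real) \<Rightarrow> (real ^ 'n) set \<Rightarrow> (real ^ 'n) set \<Rightarrow> (real ^ 'n \<Rightarrow> real) \<Rightarrow> bool" where
  "locally_D_optimal \<beta> X D w \<longleftrightarrow> is_design X D w \<and>
     (\<forall>D' w'. is_design X D' w' \<longrightarrow>
        det_on idx (info_matrix \<beta> D' w') \<le> det_on idx (info_matrix \<beta> D w))"

end

theory Submission
  imports Defs "Jordan_Normal_Form.Determinant"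
begin



definition gg :: "real \<Rightarrow> real" where "gg t = (1 - t)^2 + exp 2 * t^2"

lemma exp2_gt: "exp (2::real) \<ge> 5"
proof -
  have "exp (2::real) \<ge> 1 + 2 + 2^2/2" using exp_lower_Taylor_quadratic[of 2] by simp
  then show ?thesis by simp
qed

lemma gg_le: assumes t: "t \<ge> 0" shows "gg t \<le> exp (2*t)"
proof -
  define E where "E = exp (2::real)"
  have E5: "E \<ge> 5" using exp2_gt E_def by simp
  define phi where "phi t = gg t * exp (-2*t)" for t
  have d: "DERIV phi x :> 2 * exp (-2*x) * (1 - x) * ((E+1)*x - 2)" for x
  proof -
    have "DERIV phi x :> (2*(1-x)*(-1) + E*(2*x)) * exp (-2*x) + gg x * (exp (-2*x) * (-2))"
      unfolding phi_def gg_def E_def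
      by (auto intro!: derivative_eq_intros)
    moreover have "(2*(1-x)*(-1) + E*(2*x)) * exp (-2*x) + gg x * (exp (-2*x) * (-2))
       = 2 * exp (-2*x) * (1 - x) * ((E+1)*x - 2)"
      unfolding gg_def E_def[symmetric] by (simp add: algebra_simps power2_eq_square)
    ultimately show ?thesis by simp
  qed
  have p0: "phi 0 = 1" unfolding phi_def gg_def by simp
  have p1: "phi 1 = 1" unfolding phi_def gg_def by (simp add: exp_minus field_simps)
  define t0 where "t0 = 2/(E+1)"
  have t0: "0 < t0" "t0 < 1" using E5 by (auto simp: t0_def field_simps)
  have "phi t \<le> 1"
  proof (cases "t \<le> t0")
    case True
    have "phi t \<le> phi 0"
    proof (rule DERIV_nonpos_imp_nonincreasing[OF t])
      fix x assume x: "0 \<le> x" "x \<le> t"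
      have "(E+1)*x \<le> (E+1)*t0" using x True E5 by (intro mult_left_mono) auto
      also have "\<dots> = 2" using E5 by (simp add: t0_def field_simps)
      finally have "(E+1)*x - 2 \<le> 0" by simp
      moreover have "1 - x \<ge> 0" using x True t0 by simp
      ultimately have "2 * exp (-2*x) * (1 - x) * ((E+1)*x - 2) \<le> 0"
        by (simp add: mult_nonneg_nonpos)
      then show "\<exists>y. DERIV phi x :> y \<and> y \<le> 0" using d by blast
    qed
    then show ?thesis using p0 by simp
  next
    case False
    show ?thesis
    proof (cases "t \<le> 1")
      case True
      have "phi t \<le> phi 1"
      proof (rule DERIV_nonneg_imp_nondecreasing[OF True])
        fix x assume x: "t \<le> x" "x \<le> 1"
        have "(E+1)*t0 \<le> (E+1)*x" using x False E5 by (intro mult_left_mono) auto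
        moreover have "(E+1)*t0 = 2" using E5 by (simp add: t0_def field_simps)
        ultimately have "(E+1)*x - 2 \<ge> 0" by simp
        moreover have "1 - x \<ge> 0" using x by simp
        ultimately have "2 * exp (-2*x) * (1 - x) * ((E+1)*x - 2) \<ge> 0"
          by simp
        then show "\<exists>y. DERIV phi x :> y \<and> y \<ge> 0" using d by blast
      qed
      then show ?thesis using p1 by simp
    next
      case False
      have "phi t \<le> phi 1"
      proof (rule DERIV_nonpos_imp_nonincreasing[of 1 t phi])
        show "1 \<le> t" using False by simp
        fix x assume x: "1 \<le> x" "x \<le> t"
        have "(E+1)*(x-1) \<ge> 0" using x E5 by simp
        moreover have "(E+1)*x - 2 = (E+1)*(x-1) + (E - 1)" by (simp add: algebra_simps)
        ultimately have "(E+1)*x - 2 \<ge> 0" using E5 by simp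
        moreover have "1 - x \<le> 0" using x by simp
        ultimately have "2 * exp (-2*x) * (1 - x) * ((E+1)*x - 2) \<le> 0"
          by (simp add: mult_nonpos_nonneg)
        then show "\<exists>y. DERIV phi x :> y \<and> y \<le> 0" using d by blast
      qed
      then show ?thesis using p1 by simp
    qed
  qed
  then have "gg t * exp (-2*t) \<le> 1" by (simp add: phi_def)
  then have "gg t * exp (-2*t) * exp (2*t) \<le> exp (2*t)" by simp
  then show ?thesis by (simp add: mult.assoc flip: exp_add)
qed



definition Phi :: "real \<Rightarrow> real \<Rightarrow> real \<Rightarrow> real \<Rightarrow> real" where
  "Phi s p2 p3 p4 = (1 - s + (s^2 - p2)/2)^2 + exp 2 * ((1-s)^2*p2 + 2*(1-s)*p3 + p4)
     + (exp 2)^2 * (p2^2 - p4)/2"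

lemma Phi_ident:
  "Phi s (s^2/2) (s^3/4) (s^4/8) - Phi s (s^2*r) (s^3*r^2) (s^4*r^3) =
   s^2*(1/2-r) * ((exp 2-1)*(1-s/2)^2 + 2*exp 2*r* s + s^2*((1-2*r)*((exp 2)^2-1)/8
      + 2*r*exp 2*(exp 2-4)/8 + ((exp 2)^2/2 - exp 2)*r*(1/2-r)))"
proof -
  have "\<And>E::real. (1 - s + (s^2 - s^2/2)/2)^2 + E * ((1-s)^2*(s^2/2) + 2*(1-s)*(s^3/4) + s^4/8)
     + E^2 * ((s^2/2)^2 - s^4/8)/2 - ((1 - s + (s^2 - s^2*r)/2)^2 + E * ((1-s)^2*(s^2*r) + 2*(1-s)*(s^3*r^2) + s^4*r^3)
     + E^2 * ((s^2*r)^2 - s^4*r^3)/2) =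
   s^2*(1/2-r) * ((E-1)*(1-s/2)^2 + 2*E*r* s + s^2*((1-2*r)*(E^2-1)/8
      + 2*r*E*(E-4)/8 + (E^2/2 - E)*r*(1/2-r)))"
    by (simp add: field_simps) (simp add: algebra_simps power2_eq_square power3_eq_cube power4_eq_xxxx)
  then show ?thesis unfolding Phi_def by blast
qed

lemma Phi_r_le:
  assumes s: "s \<ge> 0" and r: "0 \<le> r" "r \<le> 1/2"
  shows "Phi s (s^2*r) (s^3*r^2) (s^4*r^3) \<le> Phi s (s^2/2) (s^3/4) (s^4/8)"
proof -
  define E where "E = exp (2::real)"
  have E5: "E \<ge> 5" using exp2_gt E_def by simp
  have a: "(1-2*r)*(E^2-1)/8 \<ge> 0" using r E5 by simp
  have b: "2*r*E*(E-4)/8 \<ge> 0" using r E5 by simp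
  have c: "(E^2/2 - E)*r*(1/2-r) \<ge> 0"
  proof -
    have "E^2/2 - E = E*(E-2)/2" by (simp add: power2_eq_square algebra_simps)
    also have "\<dots> \<ge> 0" using E5 by simp
    finally show ?thesis using r by simp
  qed
  have d: "(E-1)*(1-s/2)^2 \<ge> 0" using E5 by simp
  have e: "2*E*r* s \<ge> 0" using E5 r s by simp
  have f: "s^2*((1-2*r)*(E^2-1)/8
      + 2*r*E*(E-4)/8 + (E^2/2 - E)*r*(1/2-r)) \<ge> 0" using a b c by simp
  have R: "(E-1)*(1-s/2)^2 + 2*E*r* s + s^2*((1-2*r)*(E^2-1)/8
      + 2*r*E*(E-4)/8 + (E^2/2 - E)*r*(1/2-r)) \<ge> 0"
    using d e f by linarith
  have "s^2*(1/2-r) \<ge> 0" using r by simp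
  with R have "0 \<le> s^2*(1/2-r) * ((E-1)*(1-s/2)^2 + 2*E*r* s + s^2*((1-2*r)*(E^2-1)/8
      + 2*r*E*(E-4)/8 + (E^2/2 - E)*r*(1/2-r)))" by simp
  then show ?thesis using Phi_ident[of s r] unfolding E_def by simp
qed

lemma Phi_half: "Phi s (s^2/2) (s^3/4) (s^4/8) = (gg (s/2))^2"
proof -
  have "\<And>E::real. (1 - s + (s^2 - s^2/2)/2)^2 + E * ((1-s)^2*(s^2/2) + 2*(1-s)*(s^3/4) + s^4/8)
     + E^2 * ((s^2/2)^2 - s^4/8)/2 = ((1 - s/2)^2 + E * (s/2)^2)^2"
    by (simp add: field_simps) (simp add: algebra_simps power2_eq_square power3_eq_cube power4_eq_xxxx)
  then show ?thesis unfolding Phi_def gg_def by blast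
qed

lemma Phi_one: "Phi s (s^2) (s^3) (s^4) = gg s"
proof -
  have "\<And>E::real. (1 - s + (s^2 - s^2)/2)^2 + E * ((1-s)^2*(s^2) + 2*(1-s)*(s^3) + s^4)
     + E^2 * ((s^2)^2 - s^4)/2 = (1 - s)^2 + E * s^2"
    by (simp add: field_simps) (simp add: algebra_simps power2_eq_square power3_eq_cube power4_eq_xxxx)
  then show ?thesis unfolding Phi_def gg_def by blast
qed

lemma Phi_equal:
  assumes m: "m \<ge> 1" and t: "t \<ge> 0"
  shows "Phi (real m*t) (real m*t^2) (real m*t^3) (real m*t^4) \<le> exp (2*(real m*t))"
proof (cases "m = 1")
  case True
  then show ?thesis using gg_le[OF t] Phi_one[of t] by simp
next
  case False
  then have m2: "m \<ge> 2" using m by simp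
  define s where "s = real m * t"
  define r where "r = 1 / real m"
  have s0: "s \<ge> 0" using t by (simp add: s_def)
  have r0: "0 \<le> r" "r \<le> 1/2" using m2 by (auto simp: r_def field_simps)
  have mt: "real m * t ^ n = s ^ n * r ^ (n - 1)" if "n \<ge> 1" for n
  proof -
    obtain k where n: "n = Suc k" using \<open>n\<ge>1\<close> by (cases n) auto
    have "s ^ n * r ^ (n-1) = (real m)^(Suc k) * t^(Suc k) / (real m)^k"
      using m by (simp add: s_def r_def n power_mult_distrib power_divide)
    also have "\<dots> = real m * t ^ n" using m by (simp add: n field_simps)
    finally show ?thesis by simp
  qed
  have "Phi (real m*t) (real m*t^2) (real m*t^3) (real m*t^4) = Phi s (s^2*r) (s^3*r^2) (s^4*r^3)"
    using mt[of 2] mt[of 3] mt[of 4] by (simp add: s_def)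
  also have "\<dots> \<le> Phi s (s^2/2) (s^3/4) (s^4/8)" by (rule Phi_r_le[OF s0 r0])
  also have "\<dots> = (gg (s/2))^2" by (rule Phi_half)
  also have "\<dots> \<le> (exp (2*(s/2)))^2"
  proof -
    have "gg (s/2) \<ge> 0" unfolding gg_def by simp
    then show ?thesis using gg_le[of "s/2"] s0 by (intro power_mono) auto
  qed
  also have "\<dots> = exp (2* s)" by (simp flip: exp_add add: power2_eq_square)
  finally show ?thesis by (simp add: s_def)
qed



definition psum :: "nat \<Rightarrow> real^'n::finite \<Rightarrow> real" where
  "psum n y = (\<Sum>i\<in>UNIV. (y$i)^n)"

definition PhiV :: "real^'n::finite \<Rightarrow> real" where
  "PhiV y = Phi (psum 1 y) (psum 2 y) (psum 3 y) (psum 4 y)"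

lemma cont_PhiV: "continuous_on S PhiV"
  unfolding PhiV_def psum_def Phi_def by (intro continuous_intros) auto

lemma Phi_quad:
  fixes E s R2 R3 R4 c u :: real
  defines "G \<equiv> \<lambda>u. (1 - s + (s^2 - (R2 + c^2/2 + 2*u))/2)^2
      + E * ((1-s)^2*(R2 + c^2/2 + 2*u) + 2*(1-s)*(R3 + c^3/4 + 3*c*u) + (R4 + c^4/8 + 3*c^2*u + 2*u^2))
      + E^2 * ((R2 + c^2/2 + 2*u)^2 - (R4 + c^4/8 + 3*c^2*u + 2*u^2))/2"
  shows "G u = G 0 + (G 1 - G 0 - (1+E)^2) * u + (1+E)^2 * u^2"
  unfolding G_def by (simp add: field_simps) (simp add: algebra_simps power2_eq_square power3_eq_cube power4_eq_xxxx)

lemma quad_strict: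
  fixes a b c u U :: real
  assumes "a > 0" "0 < u" "u < U"
  shows "a*u^2 + b*u + c < max (c) (a*U^2 + b*U + c)"
proof -
  define th where "th = u / U"
  have U0: "U > 0" using assms by simp
  have th: "0 < th" "th < 1" using assms by (auto simp: th_def field_simps)
  have u: "u = th * U" using U0 by (simp add: th_def)
  have "(1-th)*c + th*(a*U^2 + b*U + c) - (a*u^2 + b*u + c) = a*u*(U-u)"
    unfolding u by (simp add: algebra_simps power2_eq_square)
  also have "\<dots> > 0" using assms by simp
  finally have "a*u^2 + b*u + c < (1-th)*c + th*(a*U^2 + b*U + c)" by simp
  also have "\<dots> \<le> (1-th)*max c (a*U^2 + b*U + c) + th*max c (a*U^2 + b*U + c)"
    using th by (intro add_mono mult_left_mono) auto
  also have "\<dots> = max c (a*U^2 + b*U + c)" by (simp add: algebra_simps)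
  finally show ?thesis .
qed

lemma sum_two:
  fixes f :: "'n::finite \<Rightarrow> real"
  assumes "i \<noteq> j"
  shows "(\<Sum>k\<in>UNIV. f k) = f i + f j + (\<Sum>k\<in>UNIV-{i,j}. f k)"
proof -
  have "(\<Sum>k\<in>UNIV. f k) = f i + (\<Sum>k\<in>UNIV-{i}. f k)"
    using sum.remove[of UNIV i f] by simp
  also have "(\<Sum>k\<in>UNIV-{i}. f k) = f j + (\<Sum>k\<in>UNIV-{i}-{j}. f k)"
    using assms by (intro sum.remove) auto
  also have "UNIV-{i}-{j} = UNIV - {i,j}" by auto
  finally show ?thesis by simp
qed

lemma Phi_quad2:
  fixes s R2 R3 R4 c u :: real
  defines "GG \<equiv> \<lambda>u. Phi s (R2 + c^2/2 + 2*u) (R3 + c^3/4 + 3*c*u) (R4 + c^4/8 + 3*c^2*u + 2*u^2)"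
  shows "GG u = (1+exp 2)^2 * u^2 + (GG 1 - GG 0 - (1+exp 2)^2) * u + GG 0"
  unfolding GG_def Phi_def by (simp add: field_simps) (simp add: algebra_simps power2_eq_square power3_eq_cube power4_eq_xxxx)

lemma abs_half_lemma: "0 < (a::real) \<Longrightarrow> 0 < b \<Longrightarrow> \<bar>a - (a+b)/2\<bar> < (a+b)/2"
  by (simp add: abs_if field_simps)

lemma PhiV_le:
  fixes y :: "real^'n::finite"
  assumes y: "\<forall>i. 0 \<le> y$i"
  shows "PhiV y \<le> exp (2 * psum 1 y)"
proof -
  define s where "s = psum 1 y"
  define K where "K = {z::real^'n. (\<forall>i. 0 \<le> z$i) \<and> psum 1 z = s}"
  have yK: "y \<in> K" using y by (simp add: K_def s_def)
  have closedK: "closed K"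
  proof -
    have "K = {z::real^'n. \<forall>i. 0 \<le> z$i} \<inter> {z. psum 1 z = s}" by (auto simp: K_def)
    moreover have "closed {z::real^'n. psum 1 z = s}"
      unfolding psum_def by (intro closed_Collect_eq continuous_intros)
    ultimately show ?thesis using closed_positive_orthant by (metis closed_Int)
  qed
  have boundedK: "bounded K"
    unfolding bounded_iff
  proof (intro exI ballI)
    fix z assume z: "z \<in> K"
    have "norm z \<le> (\<Sum>i\<in>UNIV. \<bar>z$i\<bar>)" by (rule norm_le_l1_cart)
    also have "\<dots> = s" using z by (simp add: K_def psum_def)
    finally show "norm z \<le> s" .
  qed
  have "compact K" using closedK boundedK by (simp add: compact_eq_bounded_closed)
  then obtain z where zK: "z \<in> K" and zmax: "\<And>w. w \<in> K \<Longrightarrow> PhiV w \<le> PhiV z"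
    using continuous_attains_sup[of K PhiV] cont_PhiV yK by blast
  have z0: "\<And>i. 0 \<le> z$i" and zs: "psum 1 z = s" using zK by (auto simp: K_def)
  have eq: "z$i = z$j" if i: "0 < z$i" and j: "0 < z$j" for i j
  proof (rule ccontr)
    assume ne: "z$i \<noteq> z$j"
    then have ij: "i \<noteq> j" by auto
    define c where "c = z$i + z$j"
    define zd where "zd d = (\<chi> k. if k = i then c/2 + d else if k = j then c/2 - d else z$k)" for d
    define R where "R n = (\<Sum>k\<in>UNIV-{i,j}. (z$k)^n)" for n
    have ps: "psum n (zd d) = (c/2+d)^n + (c/2-d)^n + R n" for n d
    proof -
      have "psum n (zd d) = (zd d $ i)^n + (zd d $ j)^n + (\<Sum>k\<in>UNIV-{i,j}. (zd d $ k)^n)"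
        unfolding psum_def by (rule sum_two[OF ij])
      also have "(\<Sum>k\<in>UNIV-{i,j}. (zd d $ k)^n) = R n"
        unfolding R_def by (intro sum.cong) (auto simp: zd_def)
      finally show ?thesis using ij by (simp add: zd_def)
    qed
    have psz: "psum n z = z$i^n + z$j^n + R n" for n
      unfolding psum_def R_def using sum_two[OF ij, of "\<lambda>k. (z $ k)^n"] by simp
    have s1: "psum 1 (zd d) = s" for d using ps[of 1 d] psz[of 1] zs by (simp add: c_def)
    define GG where "GG u = Phi s (R 2 + c^2/2 + 2*u) (R 3 + c^3/4 + 3*c*u) (R 4 + c^4/8 + 3*c^2*u + 2*u^2)" for u
    have PG: "PhiV (zd d) = GG (d^2)" for d
    proof -
      have "(c/2+d)^2 + (c/2-d)^2 = c^2/2 + 2*d^2" by (simp add: field_simps) (simp add: algebra_simps power2_eq_square power3_eq_cube power4_eq_xxxx)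
      then have p2: "psum 2 (zd d) = R 2 + c^2/2 + 2*d^2" using ps[of 2 d] by linarith
      have "(c/2+d)^3 + (c/2-d)^3 = c^3/4 + 3*c*d^2" by (simp add: field_simps) (simp add: algebra_simps power2_eq_square power3_eq_cube power4_eq_xxxx)
      then have p3: "psum 3 (zd d) = R 3 + c^3/4 + 3*c*d^2" using ps[of 3 d] by linarith
      have "(c/2+d)^4 + (c/2-d)^4 = c^4/8 + 3*c^2*d^2 + 2*(d^2)^2" by (simp add: field_simps) (simp add: algebra_simps power2_eq_square power3_eq_cube power4_eq_xxxx)
      then have p4: "psum 4 (zd d) = R 4 + c^4/8 + 3*c^2*d^2 + 2*(d^2)^2" using ps[of 4 d] by linarith
      show ?thesis unfolding PhiV_def GG_def s1 p2 p3 p4 by simp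
    qed
    define d0 where "d0 = z$i - c/2"
    have zd0: "zd d0 = z"
      by (rule Finite_Cartesian_Product.vec_eq_iff[THEN iffD2]) (auto simp: zd_def d0_def c_def)
    have inK: "zd d \<in> K" if "\<bar>d\<bar> \<le> c/2" for d
      using that s1[of d] z0 by (auto simp: K_def zd_def)
    have c0: "c > 0" using i j by (simp add: c_def)
    have u0: "0 < d0^2" using ne by (simp add: d0_def c_def)
    have uU: "d0^2 < (c/2)^2"
    proof -
      have "\<bar>d0\<bar> < c/2" unfolding d0_def c_def using abs_half_lemma i j by blast
      then have "\<bar>d0\<bar>^2 < (c/2)^2" by (intro power_strict_mono) auto
      then show ?thesis by simp
    qed
    define al where "al = (1 + exp (2::real))^2"
    define B where "B = GG 1 - GG 0 - al"
    have al0: "al > 0" unfolding al_def by (smt (verit) exp_gt_zero zero_less_power)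
    have GGq: "GG u = al * u^2 + B * u + GG 0" for u
      unfolding B_def al_def GG_def by (rule Phi_quad2)
    have "al * (d0^2)^2 + B * d0^2 + GG 0 < max (GG 0) (al * ((c/2)^2)^2 + B * (c/2)^2 + GG 0)"
      by (rule quad_strict[OF al0 u0 uU])
    then have "GG (d0^2) < max (GG 0) (GG ((c/2)^2))" unfolding GGq[of "d0^2"] GGq[of "(c/2)^2"] .
    also have "GG 0 = PhiV (zd 0)" using PG[of 0] by simp
    also have "GG ((c/2)^2) = PhiV (zd (c/2))" using PG[of "c/2"] by simp
    also have "max (PhiV (zd 0)) (PhiV (zd (c/2))) \<le> PhiV z"
      using zmax inK[of 0] inK[of "c/2"] c0 by simp
    finally have "PhiV (zd d0) < PhiV z" using PG[of d0] by simp
    then show False using zd0 by simp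
  qed
  define S where "S = {i. 0 < z$i}"
  have zout: "z$i = 0" if "i \<notin> S" for i using z0[of i] that by (simp add: S_def)
  have "PhiV z \<le> exp (2 * s)"
  proof (cases "S = {}")
    case True
    then have "psum n z = 0" if "n \<ge> 1" for n using zout that by (simp add: psum_def)
    then have "PhiV z = 1" by (simp add: PhiV_def Phi_def)
    moreover have "s = 0" using zs \<open>\<And>n. n \<ge> 1 \<Longrightarrow> psum n z = 0\<close>[of 1] by simp
    ultimately show ?thesis by simp
  next
    case False
    then obtain i0 where i0: "i0 \<in> S" by blast
    define t where "t = z$i0"
    have zin: "z$i = t" if "i \<in> S" for i using eq[of i i0] that i0 by (simp add: S_def t_def)
    have t0: "t \<ge> 0" using z0 by (simp add: t_def)
    define m where "m = card S"
    have m1: "m \<ge> 1" using False by (simp add: m_def card_gt_0_iff Suc_le_eq)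
    have pn: "psum n z = real m * t^n" if "n \<ge> 1" for n
    proof -
      have "psum n z = (\<Sum>i\<in>UNIV. if i \<in> S then t^n else 0)"
        unfolding psum_def using zin zout that by (intro sum.cong) auto
      also have "\<dots> = real m * t^n" by (simp add: sum.If_cases m_def)
      finally show ?thesis .
    qed
    have "PhiV z = Phi (real m*t) (real m*t^2) (real m*t^3) (real m*t^4)"
      unfolding PhiV_def using pn[of 1] pn[of 2] pn[of 3] pn[of 4] by simp
    also have "\<dots> \<le> exp (2*(real m*t))" by (rule Phi_equal[OF m1 t0])
    also have "real m * t = s" using pn[of 1] zs by simp
    finally show ?thesis .
  qed
  moreover have "PhiV y \<le> PhiV z" using zmax yK by simp
  ultimately show ?thesis by (simp add: s_def)
qed



definition gram :: "nat \<Rightarrow> 'x set \<Rightarrow> ('x \<Rightarrow> real) \<Rightarrow> ('x \<Rightarrow> nat \<Rightarrow> real) \<Rightarrow> real mat" where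
  "gram n X c v = mat n n (\<lambda>(i,j). \<Sum>x\<in>X. c x * v x i * v x j)"

lemma gram_carrier[simp]: "gram n X c v \<in> carrier_mat n n"
  unfolding gram_def by simp

lemma gram_index[simp]: "i < n \<Longrightarrow> j < n \<Longrightarrow> gram n X c v $$ (i,j) = (\<Sum>x\<in>X. c x * v x i * v x j)"
  unfolding gram_def by simp

lemma det_zero_row:
  assumes A: "A \<in> carrier_mat n n" and k: "k < n" and z: "\<And>j. j < n \<Longrightarrow> A $$ (k,j) = (0::real)"
  shows "det A = 0"
proof -
  have P0: "(\<Prod>i = 0..<n. A $$ (i, p i)) = 0" if p: "p permutes {0..<n}" for p
  proof -
    have "p k < n" using p k by (simp add: permutes_in_image)
    then show ?thesis using k z by (intro prod_zero) (auto intro!: bexI[of _ k])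
  qed
  show ?thesis unfolding det_def'[OF A]
  proof (intro sum.neutral ballI)
    fix p assume "p \<in> {p. p permutes {0..<n}}"
    then have "(\<Prod>i = 0..<n. A $$ (i, p i)) = 0" using P0 by blast
    then show "signof p * (\<Prod>i = 0..<n. A $$ (i, p i)) = 0" by simp
  qed
qed

lemma gram_det_le:
  assumes X: "finite X" and c: "\<And>x. x \<in> X \<Longrightarrow> c x \<ge> 0"
  shows "det (gram n X c v) \<le> (\<Prod>i<n. \<Sum>x\<in>X. c x * (v x i)^2)"
proof (induction n arbitrary: v)
  case 0
  then show ?case by (simp add: det_dim_zero)
next
  case (Suc n)
  define G where "G = gram (Suc n) X c v"
  define a where "a = (\<Sum>x\<in>X. c x * (v x n)^2)"
  define d where "d i = (\<Sum>x\<in>X. c x * (v x i)^2)" for i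
  have d0: "d i \<ge> 0" for i unfolding d_def using c by (intro sum_nonneg) auto
  have a0: "a \<ge> 0" using d0[of n] by (simp add: a_def d_def)
  have GC: "G \<in> carrier_mat (Suc n) (Suc n)" by (simp add: G_def)
  have Gi: "G $$ (i,j) = (\<Sum>x\<in>X. c x * v x i * v x j)" if "i < Suc n" "j < Suc n" for i j
    using that by (simp add: G_def)
  show ?case
  proof (cases "a = 0")
    case True
    have "c x * (v x n)^2 = 0" if "x \<in> X" for x
      using True sum_nonneg_eq_0_iff[OF X, of "\<lambda>x. c x * (v x n)^2"] c that
      by (simp add: a_def)
    then have cz: "c x * v x n = 0" if "x \<in> X" for x using that
      by (simp add: power2_eq_square)
    have "det G = 0"
    proof (rule det_zero_row[OF GC, of n])
      fix j assume "j < Suc n"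
      then have "G $$ (n,j) = (\<Sum>x\<in>X. c x * v x n * v x j)" by (simp add: Gi)
      also have "\<dots> = 0" by (intro sum.neutral) (use cz in auto)
      finally show "G $$ (n,j) = 0" .
    qed simp
    then show ?thesis using d0 unfolding G_def d_def[symmetric] by (simp add: prod_nonneg)
  next
    case False
    then have apos: "a > 0" using a0 by simp
    define b where "b i = (\<Sum>x\<in>X. c x * v x i * v x n)" for i
    define w where "w x i = v x i - v x n * (b i / a)" for x i
    have wsum: "(\<Sum>x\<in>X. c x * w x i * w x j) = (\<Sum>x\<in>X. c x * v x i * v x j) - b i * b j / a" for i j
    proof -
      have "(\<Sum>x\<in>X. c x * w x i * w x j) = (\<Sum>x\<in>X. c x * v x i * v x j) - (b j / a) * (\<Sum>x\<in>X. c x * v x i * v x n)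
         - (b i / a) * (\<Sum>x\<in>X. c x * v x n * v x j) + (b i / a) * (b j / a) * (\<Sum>x\<in>X. c x * (v x n)^2)"
        unfolding w_def by (simp add: sum_distrib_left sum_subtractf sum.distrib algebra_simps power2_eq_square)
      also have "\<dots> = (\<Sum>x\<in>X. c x * v x i * v x j) - b i * b j / a"
        using apos unfolding b_def a_def[symmetric] by (simp add: field_simps mult.commute mult.left_commute)
      finally show ?thesis .
    qed
    define L where "L = mat (Suc n) (Suc n) (\<lambda>(i,j). if i = j then 1 else if j = n then - b i / a else (0::real))"
    have LC: "L \<in> carrier_mat (Suc n) (Suc n)" by (simp add: L_def)
    have "upper_triangular L" unfolding upper_triangular_def L_def by auto
    then have detL: "det L = 1"
      using det_upper_triangular[OF _ LC] by (simp add: prod_list_diag_prod L_def)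
    have LG: "(L * G) $$ (i,j) = (if i = n then G $$ (n,j) else G $$ (i,j) - b i / a * G $$ (n,j))"
      if ij: "i < Suc n" "j < Suc n" for i j
    proof -
      have "(L * G) $$ (i,j) = (\<Sum>k\<in>{0..<Suc n}. L $$ (i,k) * G $$ (k,j))"
        using ij LC GC by (simp add: scalar_prod_def)
      also have "\<dots> = (\<Sum>k\<in>{0..<Suc n}. (if k = i then 1 else 0) * G $$ (k,j)
                      + (if i \<noteq> n \<and> k = n then - b i / a else 0) * G $$ (k,j))"
        using ij by (intro sum.cong) (auto simp: L_def)
      also have "\<dots> = G $$ (i,j) + (if i \<noteq> n then - b i / a * G $$ (n,j) else 0)"
        using ij by (simp add: sum.distrib if_distrib[of "\<lambda>z. z * _"] sum.delta')
      finally show ?thesis by auto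
    qed
    have col0: "(L * G) $$ (i,n) = 0" if "i < n" for i
    proof -
      have "G $$ (i,n) = b i" "G $$ (n,n) = a" using that by (auto simp: Gi b_def a_def power2_eq_square mult.assoc)
      then show ?thesis using LG[of i n] that apos by simp
    qed
    have LGC: "L * G \<in> carrier_mat (Suc n) (Suc n)" using LC GC by simp
    have "det (L * G) = (\<Sum>i<Suc n. (L * G) $$ (i,n) * cofactor (L * G) i n)"
      by (rule laplace_expansion_column[OF LGC]) simp
    also have "\<dots> = (L * G) $$ (n,n) * cofactor (L * G) n n"
      using col0 by (simp add: lessThan_Suc)
    also have "(L * G) $$ (n,n) = a"
      using LG[of n n] by (simp add: Gi a_def power2_eq_square mult.assoc)
    also have "cofactor (L * G) n n = det (mat_delete (L * G) n n)"
      by (simp add: cofactor_def)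
    also have "mat_delete (L * G) n n = gram n X c w"
    proof (rule eq_matI)
      fix i j assume ij: "i < dim_row (gram n X c w)" "j < dim_col (gram n X c w)"
      then have ij': "i < n" "j < n" by (auto simp: gram_def)
      have "mat_delete (L * G) n n $$ (i,j) = (L * G) $$ (i,j)"
        using ij' LC GC by (simp add: mat_delete_def)
      also have "\<dots> = G $$ (i,j) - b i / a * G $$ (n,j)" using LG[of i j] ij' by simp
      also have "G $$ (n,j) = b j" using ij' by (simp add: Gi b_def mult.commute mult.left_commute)
      also have "G $$ (i,j) - b i / a * b j = (\<Sum>x\<in>X. c x * w x i * w x j)"
        using wsum[of i j] ij' by (simp add: Gi)
      also have "\<dots> = gram n X c w $$ (i,j)" using ij' by simp
      finally show "mat_delete (L * G) n n $$ (i,j) = gram n X c w $$ (i,j)" .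
    qed (use LGC in \<open>auto simp: gram_def\<close>)
    finally have detLG: "det (L * G) = a * det (gram n X c w)" .
    have "det (L * G) = det G" using det_mult[OF LC GC] detL by simp
    then have "det G = a * det (gram n X c w)" using detLG by simp
    also have "\<dots> \<le> a * (\<Prod>i<n. \<Sum>x\<in>X. c x * (w x i)^2)"
      using Suc.IH[of w] apos by simp
    also have "(\<Prod>i<n. \<Sum>x\<in>X. c x * (w x i)^2) \<le> (\<Prod>i<n. d i)"
    proof (rule prod_mono)
      fix i assume "i \<in> {..<n}"
      have "(\<Sum>x\<in>X. c x * (w x i)^2) = (\<Sum>x\<in>X. c x * w x i * w x i)"
        by (simp add: power2_eq_square mult.assoc)
      also have "\<dots> = d i - b i * b i / a" using wsum[of i i] by (simp add: d_def power2_eq_square mult.assoc)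
      finally have e: "(\<Sum>x\<in>X. c x * (w x i)^2) = d i - b i * b i / a" .
      have "b i * b i / a \<ge> 0" using apos by simp
      moreover have "(\<Sum>x\<in>X. c x * (w x i)^2) \<ge> 0" using c by (intro sum_nonneg) auto
      ultimately show "0 \<le> (\<Sum>x\<in>X. c x * (w x i)^2) \<and> (\<Sum>x\<in>X. c x * (w x i)^2) \<le> d i"
        using e by simp
    qed
    then have "a * (\<Prod>i<n. \<Sum>x\<in>X. c x * (w x i)^2) \<le> a * (\<Prod>i<n. d i)"
      using apos by (simp add: mult_left_mono)
    also have "a * (\<Prod>i<n. d i) = (\<Prod>i<Suc n. d i)" by (simp add: a_def d_def)
    finally show ?thesis unfolding G_def d_def by simp
  qed
qed




lemma prod_le_mean_pow:
  fixes d :: "nat \<Rightarrow> real"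
  assumes n: "n \<ge> 1" and d: "\<And>i. i < n \<Longrightarrow> d i \<ge> 0" and s: "(\<Sum>i<n. d i) \<le> 1"
  shows "(\<Prod>i<n. d i) \<le> (1/real n)^n"
proof -
  have "(\<Prod>i<n. real n * d i) \<le> (\<Prod>i<n. exp (real n * d i - 1))"
  proof (rule prod_mono)
    fix i assume "i \<in> {..<n}"
    then have "0 \<le> real n * d i" using d by simp
    moreover have "real n * d i \<le> exp (real n * d i - 1)"
      using exp_ge_add_one_self[of "real n * d i - 1"] by simp
    ultimately show "0 \<le> real n * d i \<and> real n * d i \<le> exp (real n * d i - 1)" by simp
  qed
  also have "\<dots> = exp (\<Sum>i<n. real n * d i - 1)" by (simp add: exp_sum)
  also have "(\<Sum>i<n. real n * d i - 1) = real n * (\<Sum>i<n. d i) - real n"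
    by (simp add: sum_subtractf sum_distrib_left)
  also have "exp (real n * (\<Sum>i<n. d i) - real n) \<le> exp 0"
    using s n by (simp add: mult_left_le)
  finally have "(real n)^n * (\<Prod>i<n. d i) \<le> 1" by (simp add: prod.distrib)
  then show ?thesis using n by (simp add: field_simps power_divide)
qed

lemma det_on_mat:
  assumes e: "bij_betw e {0..<n} I"
  shows "det_on I A = Determinant.det (Matrix.mat n n (\<lambda>(i,j). A (e i) (e j)))"
proof -
  define h where "h \<sigma> = map_permutation {0..<n} e \<sigma>" for \<sigma>
  have inj: "inj_on e {0..<n}" using e by (simp add: bij_betw_def)
  have img: "e ` {0..<n} = I" using e by (simp add: bij_betw_def)
  have hb: "bij_betw h {\<sigma>. \<sigma> permutes {0..<n}} {\<pi>. \<pi> permutes I}"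
  proof -
    have "h = (\<lambda>\<pi> x. if x \<in> I then e (\<pi> (inv_into {0..<n} e x)) else x)"
      unfolding h_def map_permutation_def restrict_id_def img by (auto simp: fun_eq_iff)
    then show ?thesis using bij_betw_permutations[OF e] by simp
  qed
  have "det_on I A = (\<Sum>\<sigma>\<in>{\<sigma>. \<sigma> permutes {0..<n}}. of_int (sign (h \<sigma>)) * (\<Prod>u\<in>I. A u (h \<sigma> u)))"
    unfolding det_on_def by (rule sum.reindex_bij_betw[OF hb, symmetric])
  also have "\<dots> = (\<Sum>\<sigma>\<in>{\<sigma>. \<sigma> permutes {0..<n}}. of_int (sign \<sigma>) * (\<Prod>i\<in>{0..<n}. A (e i) (e (\<sigma> i))))"
  proof (rule sum.cong[OF refl])
    fix \<sigma> assume "\<sigma> \<in> {\<sigma>. \<sigma> permutes {0..<n}}"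
    then have sp: "\<sigma> permutes {0..<n}" by simp
    have "sign (h \<sigma>) = sign \<sigma>" unfolding h_def by (rule sign_map_permutation[OF inj sp]) simp
    moreover have "(\<Prod>u\<in>I. A u (h \<sigma> u)) = (\<Prod>i\<in>{0..<n}. A (e i) (h \<sigma> (e i)))"
      by (rule prod.reindex_bij_betw[OF e, symmetric])
    moreover have "(\<Prod>i\<in>{0..<n}. A (e i) (h \<sigma> (e i))) = (\<Prod>i\<in>{0..<n}. A (e i) (e (\<sigma> i)))"
      unfolding h_def using inj by (intro prod.cong refl) (simp add: map_permutation_apply)
    ultimately show "of_int (sign (h \<sigma>)) * (\<Prod>u\<in>I. A u (h \<sigma> u)) = of_int (sign \<sigma>) * (\<Prod>i\<in>{0..<n}. A (e i) (e (\<sigma> i)))"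
      by simp
  qed
  also have "\<dots> = Determinant.det (Matrix.mat n n (\<lambda>(i,j). A (e i) (e j)))"
  proof -
    have "Determinant.det (Matrix.mat n n (\<lambda>(i,j). A (e i) (e j))) =
       (\<Sum>\<sigma>\<in>{\<sigma>. \<sigma> permutes {0..<n}}. signof \<sigma> * (\<Prod>i = 0..<n. Matrix.mat n n (\<lambda>(i,j). A (e i) (e j)) $$ (i, \<sigma> i)))"
      by (rule det_def') simp
    also have "\<dots> = (\<Sum>\<sigma>\<in>{\<sigma>. \<sigma> permutes {0..<n}}. of_int (sign \<sigma>) * (\<Prod>i\<in>{0..<n}. A (e i) (e (\<sigma> i))))"
      by (intro sum.cong refl arg_cong2[where f="(*)"] prod.cong) (auto simp: permutes_in_image)
    finally show ?thesis by simp
  qed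
  finally show ?thesis .
qed



lemma alt_pow:
  assumes "finite A"
  shows "(\<Sum>T\<in>Pow A. (-1::real)^card T) = (if A = {} then 1 else 0)"
  using assms
proof (induction A rule: finite_induct)
  case empty
  then show ?case by simp
next
  case (insert a A)
  have disj: "Pow A \<inter> insert a ` Pow A = {}" using insert.hyps by auto
  have inj: "inj_on (insert a) (Pow A)" using insert.hyps by (auto simp: inj_on_def)
  have "(\<Sum>T\<in>Pow (insert a A). (-1::real)^card T) =
        (\<Sum>T\<in>Pow A. (-1::real)^card T) + (\<Sum>T\<in>insert a ` Pow A. (-1::real)^card T)"
    unfolding Pow_insert using insert.hyps disj by (intro sum.union_disjoint) auto
  also have "(\<Sum>T\<in>insert a ` Pow A. (-1::real)^card T) = (\<Sum>T\<in>Pow A. (-1::real)^card (insert a T))"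
    by (simp add: sum.reindex[OF inj] o_def)
  also have "\<dots> = (\<Sum>T\<in>Pow A. - ((-1::real)^card T))"
  proof (intro sum.cong refl)
    fix T assume "T \<in> Pow A"
    then have "finite T" "a \<notin> T" using insert.hyps finite_subset by auto
    then show "(-1::real)^card (insert a T) = - ((-1::real)^card T)" by simp
  qed
  finally show ?case by (simp add: sum_negf)
qed

lemma alt_interval1:
  assumes SV: "S \<subseteq> V" and fin: "finite V"
  shows "(\<Sum>U\<in>{U. S \<subseteq> U \<and> U \<subseteq> V}. (-1::real)^card (V - U)) = (if S = V then 1 else 0)"
proof -
  have b: "bij_betw (\<lambda>U. V - U) {U. S \<subseteq> U \<and> U \<subseteq> V} (Pow (V - S))"
    by (rule bij_betw_byWitness[where f'="\<lambda>T. V - T"]) (use SV in auto)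
  have "(\<Sum>U\<in>{U. S \<subseteq> U \<and> U \<subseteq> V}. (-1::real)^card (V - U)) = (\<Sum>T\<in>Pow (V - S). (-1::real)^card T)"
    by (rule sum.reindex_bij_betw[OF b])
  also have "\<dots> = (if V - S = {} then 1 else 0)" using fin by (intro alt_pow) auto
  finally show ?thesis using SV by auto
qed

lemma alt_interval2:
  assumes SV: "S \<subseteq> V" and fin: "finite V"
  shows "(\<Sum>U\<in>{U. S \<subseteq> U \<and> U \<subseteq> V}. (-1::real)^card (U - S)) = (if S = V then 1 else 0)"
proof -
  have b: "bij_betw (\<lambda>U. U - S) {U. S \<subseteq> U \<and> U \<subseteq> V} (Pow (V - S))"
    by (rule bij_betw_byWitness[where f'="\<lambda>T. T \<union> S"]) (use SV in auto)
  have "(\<Sum>U\<in>{U. S \<subseteq> U \<and> U \<subseteq> V}. (-1::real)^card (U - S)) = (\<Sum>T\<in>Pow (V - S). (-1::real)^card T)"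
    by (rule sum.reindex_bij_betw[OF b])
  also have "\<dots> = (if V - S = {} then 1 else 0)" using fin by (intro alt_pow) auto
  finally show ?thesis using SV by auto
qed

definition lag :: "'n::finite set \<Rightarrow> real^'n \<Rightarrow> real" where
  "lag U y = (\<Sum>V\<in>{V\<in>idx. U \<subseteq> V}. (-1)^card (V - U) * regf V y)"

definition ind :: "'n::finite set \<Rightarrow> real^'n" where
  "ind W = (\<chi> j. if j \<in> W then 1 else 0)"

lemma idx_mono: "V \<in> idx \<Longrightarrow> U \<subseteq> V \<Longrightarrow> U \<in> (idx :: 'n::finite set set)"
  unfolding idx_def by (auto intro: order.trans[OF card_mono])

lemma regf_ind: "regf V (ind W :: real^'n::finite) = (if V \<subseteq> W then 1 else 0)"
proof (cases "V \<subseteq> W")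
  case True
  then show ?thesis unfolding regf_def ind_def by (auto intro!: prod.neutral)
next
  case False
  then obtain i where "i \<in> V" "i \<notin> W" by auto
  then show ?thesis unfolding regf_def ind_def by (auto intro!: prod_zero)
qed

lemma lag_ind:
  assumes U: "U \<in> idx" and W: "W \<in> (idx :: 'n::finite set set)"
  shows "lag U (ind W) = (if U = W then 1 else 0)"
proof -
  have "lag U (ind W) = (\<Sum>V\<in>{V\<in>idx. U \<subseteq> V}. if V \<subseteq> W then (-1::real)^card (V - U) else 0)"
    unfolding lag_def regf_ind by (intro sum.cong) auto
  also have "\<dots> = (\<Sum>V\<in>{V\<in>idx. U \<subseteq> V} \<inter> {V. V \<subseteq> W}. (-1::real)^card (V - U))"
    by (simp add: sum.If_cases)
  also have "{V\<in>idx. U \<subseteq> V} \<inter> {V. V \<subseteq> W} = {V. U \<subseteq> V \<and> V \<subseteq> W}"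
    using W idx_mono by auto
  finally have e: "lag U (ind W) = (\<Sum>V\<in>{V. U \<subseteq> V \<and> V \<subseteq> W}. (-1::real)^card (V - U))" .
  show ?thesis
  proof (cases "U \<subseteq> W")
    case True
    then show ?thesis using e alt_interval2[OF True] by simp
  next
    case False
    then have emp: "{V. U \<subseteq> V \<and> V \<subseteq> W} = {}" by auto
    have "lag U (ind W) = 0" using e unfolding emp by simp
    then show ?thesis using False by auto
  qed
qed

lemma regf_lag:
  fixes y :: "real^'n::finite" and S :: "'n set"
  assumes S: "S \<in> idx"
  shows "regf S y = (\<Sum>U\<in>{U\<in>idx. S \<subseteq> U}. lag U y)"
proof -
  have fin: "finite (idx :: 'n set set)" by simp
  have "(\<Sum>U\<in>{U\<in>idx. S \<subseteq> U}. lag U y) =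
        (\<Sum>U\<in>{U\<in>idx. S \<subseteq> U}. \<Sum>V\<in>{V\<in>idx. U \<subseteq> V}. (-1)^card (V - U) * regf V y)"
    unfolding lag_def ..
  also have "\<dots> = (\<Sum>V\<in>idx. \<Sum>U\<in>{U\<in>{U\<in>idx. S \<subseteq> U}. U \<subseteq> V}. (-1)^card (V - U) * regf V y)"
    by (rule sum.swap_restrict) auto
  also have "\<dots> = (\<Sum>V\<in>idx. if V = S then regf V y else 0)"
  proof (intro sum.cong refl)
    fix V :: "'n set" assume V: "V \<in> idx"
    show "(\<Sum>U\<in>{U\<in>{U\<in>idx. S \<subseteq> U}. U \<subseteq> V}. (-1)^card (V - U) * regf V y) = (if V = S then regf V y else 0)"
    proof (cases "S \<subseteq> V")
      case True
      have "{U\<in>{U\<in>idx. S \<subseteq> U}. U \<subseteq> V} = {U. S \<subseteq> U \<and> U \<subseteq> V}"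
        using V idx_mono by auto
      then have "(\<Sum>U\<in>{U\<in>{U\<in>idx. S \<subseteq> U}. U \<subseteq> V}. (-1)^card (V - U) * regf V y)
          = (\<Sum>U\<in>{U. S \<subseteq> U \<and> U \<subseteq> V}. (-1::real)^card (V - U)) * regf V y"
        by (simp add: sum_distrib_right)
      also have "\<dots> = (if S = V then 1 else 0) * regf V y"
        using alt_interval1[OF True] by simp
      finally show ?thesis by auto
    next
      case False
      then have emp: "{U\<in>{U\<in>idx. S \<subseteq> U}. U \<subseteq> V} = {}" by auto
      have "V \<noteq> S" using False by auto
      then show ?thesis unfolding emp by simp
    qed
  qed
  also have "\<dots> = regf S y" using S by simp
  finally show ?thesis by simp
qed



lemma pair_sum:
  fixes a :: "'a \<Rightarrow> real"
  assumes "finite A"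
  shows "(\<Sum>V\<in>{V. V \<subseteq> A \<and> card V = 2}. \<Prod>i\<in>V. a i) = ((\<Sum>i\<in>A. a i)^2 - (\<Sum>i\<in>A. (a i)^2)) / 2"
  using assms
proof (induction A rule: finite_induct)
  case empty
  have "{V. V \<subseteq> ({}::'a set) \<and> card V = 2} = {}" by auto
  then show ?case by simp
next
  case (insert b A)
  define P where "P = {V. V \<subseteq> A \<and> card V = 2}"
  have eq: "{V. V \<subseteq> insert b A \<and> card V = 2} = P \<union> (\<lambda>j. {b,j}) ` A"
  proof (intro equalityI subsetI)
    fix V assume "V \<in> {V. V \<subseteq> insert b A \<and> card V = 2}"
    then have V: "V \<subseteq> insert b A" "card V = 2" by auto
    then obtain x y where xy: "V = {x,y}" "x \<noteq> y" by (auto simp: card_2_iff)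
    show "V \<in> P \<union> (\<lambda>j. {b,j}) ` A"
    proof (cases "b \<in> V")
      case False
      then show ?thesis using V by (auto simp: P_def)
    next
      case True
      then have "V = {b,y} \<and> y \<in> A \<or> V = {b,x} \<and> x \<in> A" using xy V insert.hyps by auto
      then show ?thesis by auto
    qed
  next
    fix V assume "V \<in> P \<union> (\<lambda>j. {b,j}) ` A"
    then show "V \<in> {V. V \<subseteq> insert b A \<and> card V = 2}"
      using insert.hyps by (auto simp: P_def card_insert_if)
  qed
  have disj: "P \<inter> (\<lambda>j. {b,j}) ` A = {}" using insert.hyps by (auto simp: P_def)
  have inj: "inj_on (\<lambda>j. {b,j}) A" using insert.hyps by (auto simp: inj_on_def doubleton_eq_iff)
  have finP: "finite P" using insert.hyps by (simp add: P_def)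
  have "(\<Sum>V\<in>{V. V \<subseteq> insert b A \<and> card V = 2}. \<Prod>i\<in>V. a i) =
        (\<Sum>V\<in>P. \<Prod>i\<in>V. a i) + (\<Sum>V\<in>(\<lambda>j. {b,j}) ` A. \<Prod>i\<in>V. a i)"
    unfolding eq using disj finP insert.hyps by (intro sum.union_disjoint) auto
  also have "(\<Sum>V\<in>(\<lambda>j. {b,j}) ` A. \<Prod>i\<in>V. a i) = (\<Sum>j\<in>A. a b * a j)"
  proof -
    have "(\<Sum>V\<in>(\<lambda>j. {b,j}) ` A. \<Prod>i\<in>V. a i) = (\<Sum>j\<in>A. \<Prod>i\<in>{b,j}. a i)"
      by (simp add: sum.reindex[OF inj] o_def)
    also have "\<dots> = (\<Sum>j\<in>A. a b * a j)"
    proof (intro sum.cong refl)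
      fix j assume "j \<in> A"
      then have "b \<notin> {j}" using insert.hyps by auto
      then show "(\<Prod>i\<in>{b,j}. a i) = a b * a j" by (simp add: prod.insert)
    qed
    finally show ?thesis .
  qed
  also have "(\<Sum>j\<in>A. a b * a j) = a b * (\<Sum>i\<in>A. a i)" by (simp add: sum_distrib_left)
  also have "(\<Sum>V\<in>P. \<Prod>i\<in>V. a i) = ((\<Sum>i\<in>A. a i)^2 - (\<Sum>i\<in>A. (a i)^2)) / 2"
    using insert.IH by (simp add: P_def)
  finally show ?case using insert.hyps
    by (simp add: power2_eq_square field_simps)
qed

lemma idx_split:
  fixes f :: "'n::finite set \<Rightarrow> real"
  shows "(\<Sum>U\<in>idx. f U) = f {} + (\<Sum>i\<in>UNIV. f {i}) + (\<Sum>U\<in>{U. card U = 2}. f U)"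
proof -
  have e: "idx = ({{}} \<union> range (\<lambda>i. {i})) \<union> {U::'n set. card U = 2}"
  proof (intro equalityI subsetI)
    fix U :: "'n set" assume "U \<in> idx"
    then have "card U \<le> 2" by (simp add: idx_def)
    then consider "card U = 0" | "card U = 1" | "card U = 2" by linarith
    then show "U \<in> ({{}} \<union> range (\<lambda>i. {i})) \<union> {U. card U = 2}"
    proof cases
      case 1
      then have "U = {}" using card_eq_0_iff[of U] by simp
      then show ?thesis by simp
    next
      case 2
      then show ?thesis by (auto simp: card_1_singleton_iff)
    qed simp
  qed (auto simp: idx_def)
  have inj: "inj (\<lambda>i::'n. {i})" by (simp add: inj_on_def)
  have "(\<Sum>U\<in>idx. f U) = (\<Sum>U\<in>{{}} \<union> range (\<lambda>i. {i}). f U) + (\<Sum>U\<in>{U. card U = 2}. f U)"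
    unfolding e by (intro sum.union_disjoint) auto
  also have "(\<Sum>U\<in>{{}} \<union> range (\<lambda>i. {i}). f U) = f {} + (\<Sum>U\<in>range (\<lambda>i. {i}). f U)"
    by (subst sum.union_disjoint) auto
  also have "(\<Sum>U\<in>range (\<lambda>i::'n. {i}). f U) = (\<Sum>i\<in>UNIV. f {i})"
    by (simp add: sum.reindex[OF inj] o_def)
  finally show ?thesis .
qed

lemma sigma2:
  fixes y :: "real^'n::finite"
  shows "(\<Sum>U\<in>{U::'n set. card U = 2}. regf U y) = ((psum 1 y)^2 - psum 2 y) / 2"
  using pair_sum[of "UNIV::'n set" "\<lambda>i. y$i"] unfolding regf_def psum_def by simp

lemma lag_empty:
  fixes y :: "real^'n::finite"
  shows "lag {} y = 1 - psum 1 y + ((psum 1 y)^2 - psum 2 y) / 2"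
proof -
  have "lag {} y = (\<Sum>V\<in>idx. (-1)^card V * regf V y)"
    unfolding lag_def by simp
  also have "\<dots> = 1 - (\<Sum>i\<in>UNIV. y$i) + (\<Sum>U\<in>{U::'n set. card U = 2}. regf U y)"
    unfolding idx_split by (simp add: regf_def sum_negf)
  also have "\<dots> = 1 - psum 1 y + ((psum 1 y)^2 - psum 2 y) / 2"
    unfolding sigma2 by (simp add: psum_def)
  finally show ?thesis .
qed

lemma lag_single:
  fixes y :: "real^'n::finite"
  shows "lag {i} y = y$i * (1 - psum 1 y + y$i)"
proof -
  have e: "{V\<in>idx. {i} \<subseteq> V} = insert {i} ((\<lambda>j. {i,j}) ` (UNIV - {i}))"
  proof (intro equalityI subsetI)
    fix V :: "'n set" assume "V \<in> {V\<in>idx. {i} \<subseteq> V}"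
    then have V: "card V \<le> 2" "i \<in> V" by (auto simp: idx_def)
    show "V \<in> insert {i} ((\<lambda>j. {i,j}) ` (UNIV - {i}))"
    proof (cases "V = {i}")
      case False
      then obtain j where j: "j \<in> V" "j \<noteq> i" using V by auto
      have "card {i,j} \<le> card V" using V j by (intro card_mono) auto
      then have "card {i,j} = card V" using V j by auto
      then have "{i,j} = V" using V j by (intro card_subset_eq) auto
      then show ?thesis using j by auto
    qed simp
  qed (auto simp: idx_def card_insert_if)
  have inj: "inj_on (\<lambda>j. {i,j}) (UNIV - {i})" by (auto simp: inj_on_def doubleton_eq_iff)
  have "lag {i} y = (\<Sum>V\<in>insert {i} ((\<lambda>j. {i,j}) ` (UNIV - {i})). (-1)^card (V - {i}) * regf V y)"
    unfolding lag_def e ..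
  also have "\<dots> = y$i + (\<Sum>V\<in>(\<lambda>j. {i,j}) ` (UNIV - {i}). (-1)^card (V - {i}) * regf V y)"
    by (subst sum.insert) (auto simp: regf_def)
  also have "(\<Sum>V\<in>(\<lambda>j. {i,j}) ` (UNIV - {i}). (-1)^card (V - {i}) * regf V y)
      = (\<Sum>j\<in>UNIV - {i}. - (y$i * y$j))"
    by (simp add: sum.reindex[OF inj] o_def regf_def insert_Diff_if)
  also have "\<dots> = - (y$i * (psum 1 y - y$i))"
    by (simp add: sum_negf sum_distrib_left[symmetric] psum_def sum_diff1)
  finally show ?thesis by (simp add: algebra_simps)
qed

lemma lag_two:
  fixes y :: "real^'n::finite"
  assumes "card U = 2"
  shows "lag U y = regf U y"
proof -
  have "{V\<in>idx. U \<subseteq> V} = {U}"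
  proof (intro equalityI subsetI)
    fix V :: "'n set" assume "V \<in> {V\<in>idx. U \<subseteq> V}"
    then have "card V \<le> 2" "U \<subseteq> V" by (auto simp: idx_def)
    then show "V \<in> {U}" using assms card_subset_eq[of V U] card_mono[of V U] by auto
  qed (use assms in \<open>auto simp: idx_def\<close>)
  then show ?thesis unfolding lag_def by simp
qed

lemma lag_sq_sum:
  fixes y :: "real^'n::finite"
  shows "(\<Sum>U\<in>idx. exp 2 ^ card U * (lag U y)^2) = PhiV y"
proof -
  define s where "s = psum 1 y"
  define p2 where "p2 = psum 2 y"
  define p3 where "p3 = psum 3 y"
  define p4 where "p4 = psum 4 y"
  have a: "(\<Sum>i\<in>UNIV. (lag {i} y)^2) = (1-s)^2*p2 + 2*(1-s)*p3 + p4"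
  proof -
    have "(\<Sum>i\<in>UNIV. (lag {i} y)^2) = (\<Sum>i\<in>UNIV. (1-s)^2 * (y$i)^2 + 2*(1-s) * (y$i)^3 + (y$i)^4)"
      unfolding lag_single s_def[symmetric]
      by (intro sum.cong refl) (simp add: power2_eq_square power3_eq_cube power4_eq_xxxx algebra_simps)
    also have "\<dots> = (1-s)^2*p2 + 2*(1-s)*p3 + p4"
      by (simp add: sum.distrib sum_distrib_left[symmetric] p2_def p3_def p4_def psum_def)
    finally show ?thesis .
  qed
  have b: "(\<Sum>U\<in>{U::'n set. card U = 2}. (lag U y)^2) = (p2^2 - p4)/2"
  proof -
    have "(\<Sum>U\<in>{U::'n set. card U = 2}. (lag U y)^2) = (\<Sum>U\<in>{U::'n set. U \<subseteq> UNIV \<and> card U = 2}. \<Prod>i\<in>U. (y$i)^2)"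
      by (intro sum.cong) (auto simp: lag_two regf_def prod_power_distrib)
    also have "\<dots> = ((\<Sum>i\<in>UNIV. (y$i)^2)^2 - (\<Sum>i\<in>UNIV. ((y$i)^2)^2))/2"
      by (rule pair_sum) simp
    also have "\<dots> = (p2^2 - p4)/2"
      by (simp add: p2_def p4_def psum_def power_mult[symmetric])
    finally show ?thesis .
  qed
  have "(\<Sum>U\<in>idx. exp 2 ^ card U * (lag U y)^2) =
        (lag {} y)^2 + exp 2 * (\<Sum>i\<in>UNIV. (lag {i} y)^2) + (exp 2)^2 * (\<Sum>U\<in>{U::'n set. card U = 2}. (lag U y)^2)"
    unfolding idx_split by (simp add: sum_distrib_left)
  also have "\<dots> = PhiV y"
    unfolding a b lag_empty PhiV_def Phi_def s_def[symmetric] p2_def[symmetric] p3_def[symmetric] p4_def[symmetric]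
    by simp
  finally show ?thesis .
qed



definition zpt :: "'n::finite set \<Rightarrow> real^'n" where
  "zpt U = (\<chi> j. if j \<in> U then 2 else 0)"

definition half :: "real^'n::finite \<Rightarrow> real^'n" where
  "half x = (\<chi> j. x$j / 2)"

lemma half_zpt: "half (zpt W) = ind W"
  unfolding half_def zpt_def ind_def by (rule Finite_Cartesian_Product.vec_eq_iff[THEN iffD2]) simp

lemma regf_zpt: "regf S (zpt U :: real^'n::finite) = (if S \<subseteq> U then 2^card S else 0)"
proof (cases "S \<subseteq> U")
  case True
  then have "regf S (zpt U) = (\<Prod>i\<in>S. 2)" unfolding regf_def zpt_def by (intro prod.cong) auto
  then show ?thesis using True by simp
next
  case False
  then obtain i where "i \<in> S" "i \<notin> U" by auto
  then show ?thesis unfolding regf_def zpt_def by (auto intro!: prod_zero)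
qed

lemma regf_half: "regf S (x :: real^'n::finite) = 2^card S * regf S (half x)"
proof -
  have "regf S x = (\<Prod>i\<in>S. 2 * (half x $ i))" unfolding regf_def half_def by simp
  also have "\<dots> = 2^card S * regf S (half x)" by (simp add: prod.distrib regf_def)
  finally show ?thesis .
qed

lemma interp:
  fixes x :: "real^'n::finite" and S :: "'n set"
  assumes S: "S \<in> idx"
  shows "regf S x = (\<Sum>U\<in>idx. lag U (half x) * regf S (zpt U))"
proof -
  have "(\<Sum>U\<in>idx. lag U (half x) * regf S (zpt U)) = (\<Sum>U\<in>idx. if S \<subseteq> U then 2^card S * lag U (half x) else 0)"
    by (intro sum.cong refl) (simp add: regf_zpt)
  also have "\<dots> = 2^card S * (\<Sum>U\<in>{U\<in>idx. S \<subseteq> U}. lag U (half x))"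
    by (simp add: sum.inter_filter[symmetric] sum_distrib_left)
  also have "\<dots> = regf S x" using regf_lag[OF S, of "half x"] regf_half[of S x] by simp
  finally show ?thesis by simp
qed

lemma intensity_eq:
  fixes \<beta> :: "'n::finite set \<Rightarrow> real"
  assumes b: "\<And>S. \<beta> S = (if card S = 1 then -1 else 0)"
  shows "intensity \<beta> x = exp (- (\<Sum>i\<in>UNIV. x$i))"
proof -
  have "(\<Sum>S\<in>idx. \<beta> S * regf S x) = - (\<Sum>i\<in>UNIV. x$i)"
    unfolding idx_split by (simp add: b regf_def sum_negf)
  then show ?thesis unfolding intensity_def by simp
qed

lemma sum_zpt: "(\<Sum>i\<in>UNIV. (zpt U :: real^'n::finite) $ i) = 2 * real (card U)"
proof -
  have "(\<Sum>i\<in>UNIV. (zpt U :: real^'n) $ i) = (\<Sum>i\<in>UNIV. if i \<in> U then 2 else 0)"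
    unfolding zpt_def by simp
  also have "\<dots> = 2 * real (card U)" by (simp add: sum.If_cases)
  finally show ?thesis .
qed

lemma sens_le:
  fixes \<beta> :: "'n::finite set \<Rightarrow> real" and x :: "real^'n"
  assumes b: "\<And>S. \<beta> S = (if card S = 1 then -1 else 0)" and x: "\<forall>i. 0 \<le> x$i"
  shows "intensity \<beta> x * (\<Sum>U\<in>idx. (lag U (half x))^2 / intensity \<beta> (zpt U)) \<le> 1"
proof -
  have "(\<Sum>U\<in>idx. (lag U (half x))^2 / intensity \<beta> (zpt U)) = (\<Sum>U\<in>idx. exp 2 ^ card U * (lag U (half x))^2)"
  proof (intro sum.cong refl)
    fix U :: "'n set"
    have "1 / intensity \<beta> (zpt U) = 1 / exp (- (2 * real (card U)))" unfolding intensity_eq[OF b] sum_zpt ..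
    also have "\<dots> = exp (real (card U) * 2)" by (simp add: exp_minus mult.commute divide_inverse)
    also have "\<dots> = exp 2 ^ card U" by (rule exp_of_nat_mult)
    finally have e: "1 / intensity \<beta> (zpt U) = exp 2 ^ card U" .
    show "(lag U (half x))^2 / intensity \<beta> (zpt U) = exp 2 ^ card U * (lag U (half x))^2"
      unfolding e[symmetric] by simp
  qed
  also have "\<dots> = PhiV (half x)" by (rule lag_sq_sum)
  also have "\<dots> \<le> exp (2 * psum 1 (half x))" using x by (intro PhiV_le) (simp add: half_def)
  also have "2 * psum 1 (half x) = (\<Sum>i\<in>UNIV. x$i)"
    by (simp add: psum_def half_def sum_divide_distrib[symmetric])
  finally have "(\<Sum>U\<in>idx. (lag U (half x))^2 / intensity \<beta> (zpt U)) \<le> exp (\<Sum>i\<in>UNIV. x$i)" .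
  then have "intensity \<beta> x * (\<Sum>U\<in>idx. (lag U (half x))^2 / intensity \<beta> (zpt U)) \<le> exp (- (\<Sum>i\<in>UNIV. x$i)) * exp (\<Sum>i\<in>UNIV. x$i)"
    unfolding intensity_eq[OF b] by (intro mult_left_mono) auto
  also have "\<dots> = 1" by (simp flip: exp_add)
  finally show ?thesis .
qed

lemma card_idx: "real (card (idx :: 'n::finite set set)) = 1 + real CARD('n) + real CARD('n) * (real CARD('n) - 1) / 2"
proof -
  have c: "real (card (idx :: 'n set set)) = 1 + real CARD('n) + real (card {U::'n set. card U = 2})"
  proof -
    have "real (card (idx :: 'n set set)) = (\<Sum>U\<in>(idx::'n set set). (1::real))" by simp
    also have "\<dots> = 1 + real CARD('n) + real (card {U::'n set. card U = 2})"
      using idx_split[where f="\<lambda>_::'n set. (1::real)"] by simp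
    finally show ?thesis .
  qed
  have "card {U::'n set. card U = 2} = CARD('n) choose 2"
    using n_subsets[of "UNIV :: 'n set" 2] by simp
  also have "\<dots> = CARD('n) * (CARD('n) - 1) div 2" by (rule choose_two)
  finally have "real (card {U::'n set. card U = 2}) = real (CARD('n) * (CARD('n) - 1)) / 2"
    by (simp add: real_of_nat_div)
  also have "\<dots> = real CARD('n) * (real CARD('n) - 1) / 2"
    using of_nat_diff[of 1 "CARD('n)"] by simp
  finally show ?thesis using c by simp
qed



definition Fm :: "(nat \<Rightarrow> 'n::finite set) \<Rightarrow> nat \<Rightarrow> real Matrix.mat" where
  "Fm e p = Matrix.mat p p (\<lambda>(a,i). regf (e i) (zpt (e a) :: real^'n))"

definition Nm :: "('n::finite set \<Rightarrow> real) \<Rightarrow> (nat \<Rightarrow> 'n set) \<Rightarrow> nat \<Rightarrow> (real^'n) set \<Rightarrow> (real^'n \<Rightarrow> real) \<Rightarrow> real Matrix.mat" where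
  "Nm \<beta> e p D w = Matrix.mat p p (\<lambda>(a,b). \<Sum>x\<in>D. w x * intensity \<beta> x * lag (e a) (half x) * lag (e b) (half x))"

lemma Fm_carrier[simp]: "Fm e p \<in> carrier_mat p p" by (simp add: Fm_def)
lemma Nm_carrier[simp]: "Nm \<beta> e p D w \<in> carrier_mat p p" by (simp add: Nm_def)

lemma mat_mult3_index:
  fixes A B C :: "real Matrix.mat"
  assumes "A \<in> carrier_mat p p" "B \<in> carrier_mat p p" "C \<in> carrier_mat p p" "i < p" "j < p"
  shows "(A * B * C) $$ (i,j) = (\<Sum>a\<in>{0..<p}. A $$ (i,a) * (\<Sum>b\<in>{0..<p}. B $$ (a,b) * C $$ (b,j)))"
proof -
  have AB: "A * B \<in> carrier_mat p p" using assms by simp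
  have "(A * B * C) $$ (i,j) = (\<Sum>b\<in>{0..<p}. (A * B) $$ (i,b) * C $$ (b,j))"
    using assms AB by (simp add: scalar_prod_def del: assoc_mult_mat)
  also have "\<dots> = (\<Sum>b\<in>{0..<p}. (\<Sum>a\<in>{0..<p}. A $$ (i,a) * B $$ (a,b)) * C $$ (b,j))"
    using assms by (intro sum.cong refl) (simp add: scalar_prod_def)
  also have "\<dots> = (\<Sum>b\<in>{0..<p}. \<Sum>a\<in>{0..<p}. A $$ (i,a) * (B $$ (a,b) * C $$ (b,j)))"
    by (simp add: sum_distrib_right mult.assoc)
  also have "\<dots> = (\<Sum>a\<in>{0..<p}. \<Sum>b\<in>{0..<p}. A $$ (i,a) * (B $$ (a,b) * C $$ (b,j)))"
    by (rule sum.swap)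
  also have "\<dots> = (\<Sum>a\<in>{0..<p}. A $$ (i,a) * (\<Sum>b\<in>{0..<p}. B $$ (a,b) * C $$ (b,j)))"
    by (simp add: sum_distrib_left)
  finally show ?thesis .
qed

lemma info_fact:
  fixes \<beta> :: "'n::finite set \<Rightarrow> real"
  assumes e: "bij_betw e {0..<p} (idx :: 'n set set)" and D: "finite D"
  shows "Matrix.mat p p (\<lambda>(i,j). info_matrix \<beta> D w (e i) (e j)) = transpose_mat (Fm e p) * Nm \<beta> e p D w * Fm e p"
proof (rule eq_matI)
  fix i j assume ij: "i < dim_row (transpose_mat (Fm e p) * Nm \<beta> e p D w * Fm e p)"
     "j < dim_col (transpose_mat (Fm e p) * Nm \<beta> e p D w * Fm e p)"
  then have ij: "i < p" "j < p" by (auto simp: Fm_def)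
  define F where "F a i = regf (e i) (zpt (e a) :: real^'n)" for a i
  define l where "l a x = lag (e a) (half x)" for a x
  have eI: "e i \<in> idx" "e j \<in> idx" using e ij by (auto simp: bij_betw_def)
  have rf: "regf (e i) x = (\<Sum>a\<in>{0..<p}. l a x * F a i)" if "i < p" for i x
  proof -
    have "e i \<in> idx" using e that by (auto simp: bij_betw_def)
    then have "regf (e i) x = (\<Sum>U\<in>idx. lag U (half x) * regf (e i) (zpt U))" by (rule interp)
    also have "\<dots> = (\<Sum>a\<in>{0..<p}. lag (e a) (half x) * regf (e i) (zpt (e a)))"
      by (rule sum.reindex_bij_betw[OF e, symmetric])
    finally show ?thesis by (simp add: l_def F_def)
  qed
  have "Matrix.mat p p (\<lambda>(i,j). info_matrix \<beta> D w (e i) (e j)) $$ (i,j) =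
        (\<Sum>x\<in>D. w x * intensity \<beta> x * (\<Sum>a\<in>{0..<p}. l a x * F a i) * (\<Sum>b\<in>{0..<p}. l b x * F b j))"
    using ij rf by (simp add: info_matrix_def)
  also have "\<dots> = (\<Sum>x\<in>D. \<Sum>a\<in>{0..<p}. \<Sum>b\<in>{0..<p}. F a i * ((w x * intensity \<beta> x * l a x * l b x) * F b j))"
    by (intro sum.cong refl) (simp add: sum_distrib_left sum_distrib_right algebra_simps)
  also have "\<dots> = (\<Sum>a\<in>{0..<p}. \<Sum>x\<in>D. \<Sum>b\<in>{0..<p}. F a i * ((w x * intensity \<beta> x * l a x * l b x) * F b j))"
    by (rule sum.swap)
  also have "\<dots> = (\<Sum>a\<in>{0..<p}. \<Sum>b\<in>{0..<p}. \<Sum>x\<in>D. F a i * ((w x * intensity \<beta> x * l a x * l b x) * F b j))"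
    by (intro sum.cong refl sum.swap)
  also have "\<dots> = (\<Sum>a\<in>{0..<p}. F a i * (\<Sum>b\<in>{0..<p}. (\<Sum>x\<in>D. w x * intensity \<beta> x * l a x * l b x) * F b j))"
    by (simp add: sum_distrib_left sum_distrib_right)
  also have "\<dots> = (transpose_mat (Fm e p) * Nm \<beta> e p D w * Fm e p) $$ (i,j)"
    using ij by (subst mat_mult3_index[of _ p]) (auto intro!: sum.cong simp: Fm_def Nm_def F_def l_def)
  finally show "Matrix.mat p p (\<lambda>(i,j). info_matrix \<beta> D w (e i) (e j)) $$ (i,j) =
        (transpose_mat (Fm e p) * Nm \<beta> e p D w * Fm e p) $$ (i,j)" .
qed (auto simp: Fm_def)

lemma det_info:
  fixes \<beta> :: "'n::finite set \<Rightarrow> real"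
  assumes e: "bij_betw e {0..<p} (idx :: 'n set set)" and D: "finite D"
  shows "det_on idx (info_matrix \<beta> D w) = (Determinant.det (Fm e p))^2 * Determinant.det (Nm \<beta> e p D w)"
proof -
  have "det_on idx (info_matrix \<beta> D w) = Determinant.det (Matrix.mat p p (\<lambda>(i,j). info_matrix \<beta> D w (e i) (e j)))"
    by (rule det_on_mat[OF e])
  also have "\<dots> = Determinant.det (transpose_mat (Fm e p) * Nm \<beta> e p D w * Fm e p)"
    unfolding info_fact[OF e D] ..
  also have "\<dots> = Determinant.det (transpose_mat (Fm e p)) * Determinant.det (Nm \<beta> e p D w) * Determinant.det (Fm e p)"
  proof -
    have T: "transpose_mat (Fm e p) \<in> carrier_mat p p" by simp
    have TN: "transpose_mat (Fm e p) * Nm \<beta> e p D w \<in> carrier_mat p p" by (rule mult_carrier_mat[OF T Nm_carrier[of \<beta> e p D w]])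
    show ?thesis unfolding det_mult[OF TN Fm_carrier[of e p]] det_mult[OF T Nm_carrier[of \<beta> e p D w]] ..
  qed
  also have "\<dots> = (Determinant.det (Fm e p))^2 * Determinant.det (Nm \<beta> e p D w)"
    by (simp add: det_transpose[of _ p] power2_eq_square)
  finally show ?thesis .
qed

lemma det_diag:
  "Determinant.det (Matrix.mat p p (\<lambda>(a,b). if a = b then f a else (0::real))) = (\<Prod>a<p. f a)"
proof -
  have "upper_triangular (Matrix.mat p p (\<lambda>(a,b). if a = b then f a else (0::real)))"
    unfolding upper_triangular_def by auto
  then have "Determinant.det (Matrix.mat p p (\<lambda>(a,b). if a = b then f a else (0::real))) =
      prod_list (diag_mat (Matrix.mat p p (\<lambda>(a,b). if a = b then f a else (0::real))))"
    by (rule det_upper_triangular[of _ p]) simp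
  also have "\<dots> = (\<Prod>a=0..<p. f a)" by (simp add: prod_list_diag_prod)
  finally show ?thesis by (simp add: atLeast0LessThan)
qed



lemma zpt_inj: "inj_on (zpt :: 'n::finite set \<Rightarrow> real^'n) A"
proof (rule inj_onI)
  fix U V :: "'n set" assume eq: "zpt U = zpt V"
  have h: "(if j \<in> U then 2 else 0::real) = (if j \<in> V then 2 else 0)" for j
  proof -
    have "(zpt U :: real^'n) $ j = zpt V $ j" using eq by simp
    then show ?thesis unfolding zpt_def by simp
  qed
  have "j \<in> U \<longleftrightarrow> j \<in> V" for j using h[of j] by (auto split: if_splits)
  then show "U = V" by blast
qed

lemma Nm_opt:
  fixes \<beta> :: "'n::finite set \<Rightarrow> real"
  assumes e: "bij_betw e {0..<p} (idx :: 'n set set)"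
  shows "Nm \<beta> e p (zpt ` idx) (\<lambda>_. c) = Matrix.mat p p (\<lambda>(a,b). if a = b then c * intensity \<beta> (zpt (e a)) else 0)"
proof (rule eq_matI)
  fix a b assume ab: "a < dim_row (Matrix.mat p p (\<lambda>(a,b). if a = b then c * intensity \<beta> (zpt (e a)) else 0))"
    "b < dim_col (Matrix.mat p p (\<lambda>(a,b). if a = b then c * intensity \<beta> (zpt (e a)) else 0))"
  then have ab: "a < p" "b < p" by auto
  have eab: "e a \<in> idx" "e b \<in> idx" using e ab by (auto simp: bij_betw_def)
  have inj: "inj_on e {0..<p}" using e by (simp add: bij_betw_def)
  have "Nm \<beta> e p (zpt ` idx) (\<lambda>_. c) $$ (a,b) =
      (\<Sum>x\<in>zpt ` idx. c * intensity \<beta> x * lag (e a) (half x) * lag (e b) (half x))"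
    using ab by (simp add: Nm_def)
  also have "\<dots> = (\<Sum>U\<in>idx. c * intensity \<beta> (zpt U) * lag (e a) (ind U) * lag (e b) (ind U))"
    by (simp add: sum.reindex[OF zpt_inj] half_zpt)
  also have "\<dots> = (\<Sum>U\<in>idx. if U = e a then (if e b = e a then c * intensity \<beta> (zpt (e a)) else 0) else 0)"
  proof (intro sum.cong refl)
    fix U :: "'n set" assume U: "U \<in> idx"
    show "c * intensity \<beta> (zpt U) * lag (e a) (ind U) * lag (e b) (ind U) =
        (if U = e a then (if e b = e a then c * intensity \<beta> (zpt (e a)) else 0) else 0)"
      using lag_ind[OF eab(1) U] lag_ind[OF eab(2) U] by auto
  qed
  also have "\<dots> = (if e b = e a then c * intensity \<beta> (zpt (e a)) else 0)"
    using eab by (simp add: sum.delta')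
  also have "\<dots> = (if a = b then c * intensity \<beta> (zpt (e a)) else 0)"
    using inj ab by (auto simp: inj_on_def)
  also have "\<dots> = Matrix.mat p p (\<lambda>(a,b). if a = b then c * intensity \<beta> (zpt (e a)) else 0) $$ (a,b)"
    using ab by simp
  finally show "Nm \<beta> e p (zpt ` idx) (\<lambda>_. c) $$ (a,b) =
      Matrix.mat p p (\<lambda>(a,b). if a = b then c * intensity \<beta> (zpt (e a)) else 0) $$ (a,b)" .
qed (auto simp: Nm_def)

lemma Nm_general:
  fixes \<beta> :: "'n::finite set \<Rightarrow> real" and D :: "(real^'n) set"
  assumes b: "\<And>S. \<beta> S = (if card S = 1 then -1 else 0)"
    and e: "bij_betw e {0..<p} (idx :: 'n set set)" and p: "p \<ge> 1"
    and D: "finite D" "D \<subseteq> {x. \<forall>i. 0 \<le> x$i}" and w: "\<And>x. x \<in> D \<Longrightarrow> w x \<ge> 0" "sum w D = 1"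
  shows "Determinant.det (Nm \<beta> e p D w) \<le> (\<Prod>a<p. intensity \<beta> (zpt (e a)) / real p)"
proof -
  define lam where "lam a = intensity \<beta> (zpt (e a))" for a
  have lam0: "lam a > 0" for a by (simp add: lam_def intensity_def)
  define r where "r a = sqrt (lam a)" for a
  have r0: "r a > 0" for a using lam0 by (simp add: r_def)
  have rr: "r a * r a = lam a" for a using lam0[of a] by (simp add: r_def)
  define Dg where "Dg = Matrix.mat p p (\<lambda>(a,b). if a = b then r a else (0::real))"
  define c where "c x = w x * intensity \<beta> x" for x
  define v where "v x a = lag (e a) (half x) / r a" for x a
  define G where "G = gram p D c v"
  have DgC: "Dg \<in> carrier_mat p p" by (simp add: Dg_def)
  have GC: "G \<in> carrier_mat p p" by (simp add: G_def)
  have c0: "c x \<ge> 0" if "x \<in> D" for x using w(1)[OF that] by (simp add: c_def intensity_def)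
  have NDG: "Nm \<beta> e p D w = Dg * G * Dg"
  proof (rule eq_matI)
    fix a b assume "a < dim_row (Dg * G * Dg)" "b < dim_col (Dg * G * Dg)"
    then have ab: "a < p" "b < p" by (auto simp: Dg_def)
    have "(Dg * G * Dg) $$ (a,b) = (\<Sum>k\<in>{0..<p}. Dg $$ (a,k) * (\<Sum>l\<in>{0..<p}. G $$ (k,l) * Dg $$ (l,b)))"
      by (rule mat_mult3_index[OF DgC GC DgC ab])
    also have "\<dots> = (\<Sum>k\<in>{0..<p}. (if k = a then r a else 0) * (G $$ (k,b) * r b))"
    proof (intro sum.cong refl)
      fix k assume k: "k \<in> {0..<p}"
      have "(\<Sum>l\<in>{0..<p}. G $$ (k,l) * Dg $$ (l,b)) = (\<Sum>l\<in>{0..<p}. if l = b then G $$ (k,b) * r b else 0)"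
        using ab by (intro sum.cong refl) (auto simp: Dg_def)
      also have "\<dots> = G $$ (k,b) * r b" using ab by (simp add: sum.delta')
      finally show "Dg $$ (a,k) * (\<Sum>l\<in>{0..<p}. G $$ (k,l) * Dg $$ (l,b)) = (if k = a then r a else 0) * (G $$ (k,b) * r b)"
        using k ab by (auto simp: Dg_def)
    qed
    also have "\<dots> = r a * (G $$ (a,b) * r b)"
      using ab by (simp add: if_distrib[of "\<lambda>z. z * _"] sum.delta' cong: if_cong)
    also have "\<dots> = (\<Sum>x\<in>D. w x * intensity \<beta> x * lag (e a) (half x) * lag (e b) (half x))"
    proof -
      have "r a * (G $$ (a,b) * r b) = (\<Sum>x\<in>D. r a * (c x * v x a * v x b) * r b)"
        using ab by (simp add: G_def sum_distrib_left sum_distrib_right mult.assoc)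
      also have "\<dots> = (\<Sum>x\<in>D. w x * intensity \<beta> x * lag (e a) (half x) * lag (e b) (half x))"
        using r0[of a] r0[of b] by (intro sum.cong refl) (simp add: c_def v_def field_simps)
      finally show ?thesis .
    qed
    also have "\<dots> = Nm \<beta> e p D w $$ (a,b)" using ab by (simp add: Nm_def)
    finally show "Nm \<beta> e p D w $$ (a,b) = (Dg * G * Dg) $$ (a,b)" by simp
  qed (auto simp: Dg_def Nm_def)
  have detDg: "Determinant.det Dg = (\<Prod>a<p. r a)" unfolding Dg_def by (rule det_diag)
  have "Determinant.det (Nm \<beta> e p D w) = Determinant.det Dg * Determinant.det G * Determinant.det Dg"
  proof -
    have DG: "Dg * G \<in> carrier_mat p p" by (rule mult_carrier_mat[OF DgC GC])
    show ?thesis unfolding NDG det_mult[OF DG DgC] det_mult[OF DgC GC] ..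
  qed
  also have "\<dots> = (\<Prod>a<p. lam a) * Determinant.det G"
    unfolding detDg by (simp add: rr prod.distrib[symmetric])
  finally have detN: "Determinant.det (Nm \<beta> e p D w) = (\<Prod>a<p. lam a) * Determinant.det G" .
  define d where "d a = (\<Sum>x\<in>D. c x * (v x a)^2)" for a
  have detG: "Determinant.det G \<le> (\<Prod>a<p. d a)"
    unfolding G_def d_def by (rule gram_det_le[OF D(1) c0])
  have d0: "d a \<ge> 0" for a unfolding d_def using c0 by (intro sum_nonneg) auto
  have sumd: "(\<Sum>a<p. d a) \<le> 1"
  proof -
    have "(\<Sum>a<p. d a) = (\<Sum>x\<in>D. w x * (intensity \<beta> x * (\<Sum>a<p. (lag (e a) (half x))^2 / lam a)))"
      unfolding d_def by (subst sum.swap) (simp add: c_def v_def power_divide rr[symmetric] power2_eq_square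
          sum_distrib_left mult.assoc)
    also have "\<dots> \<le> (\<Sum>x\<in>D. w x * 1)"
    proof (rule sum_mono)
      fix x assume x: "x \<in> D"
      have "(\<Sum>a<p. (lag (e a) (half x))^2 / lam a) = (\<Sum>U\<in>idx. (lag U (half x))^2 / intensity \<beta> (zpt U))"
        unfolding lam_def lessThan_atLeast0 by (rule sum.reindex_bij_betw[OF e])
      moreover have "\<forall>i. 0 \<le> x$i" using D(2) x by auto
      ultimately have "intensity \<beta> x * (\<Sum>a<p. (lag (e a) (half x))^2 / lam a) \<le> 1"
        using sens_le[OF b] by simp
      then show "w x * (intensity \<beta> x * (\<Sum>a<p. (lag (e a) (half x))^2 / lam a)) \<le> w x * 1"
        using w(1)[OF x] by (intro mult_left_mono) auto
    qed
    also have "\<dots> = 1" using w(2) by simp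
    finally show ?thesis .
  qed
  have "(\<Prod>a<p. d a) \<le> (1 / real p)^p" by (rule prod_le_mean_pow[OF p]) (use d0 sumd in auto)
  have "Determinant.det (Nm \<beta> e p D w) \<le> (\<Prod>a<p. lam a) * (\<Prod>a<p. d a)"
    unfolding detN using detG lam0 by (intro mult_left_mono) (auto intro: prod_nonneg less_imp_le)
  also have "\<dots> \<le> (\<Prod>a<p. lam a) * (1 / real p)^p"
    using prod_le_mean_pow[OF p, of d] d0 sumd lam0 by (intro mult_left_mono) (auto intro: prod_nonneg less_imp_le)
  also have "\<dots> = (\<Prod>a<p. lam a / real p)"
    by (simp add: prod_dividef power_one_over)
  finally show ?thesis by (simp add: lam_def)
qed



lemma design_set:
  "({0} \<union> {axis i 2 | i. True} \<union> {axis i 2 + axis j 2 | i j. i \<noteq> j}) = zpt ` (idx :: 'n::finite set set)"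
proof -
  have z0: "zpt {} = (0 :: real^'n)"
    unfolding zpt_def by (rule Finite_Cartesian_Product.vec_eq_iff[THEN iffD2]) simp
  have z1: "zpt {i} = (axis i 2 :: real^'n)" for i
    unfolding zpt_def axis_def by (rule Finite_Cartesian_Product.vec_eq_iff[THEN iffD2]) simp
  have z2: "zpt {i,j} = (axis i 2 + axis j 2 :: real^'n)" if "i \<noteq> j" for i j
    unfolding zpt_def axis_def by (rule Finite_Cartesian_Product.vec_eq_iff[THEN iffD2]) (use that in auto)
  show ?thesis
  proof (intro equalityI subsetI)
    fix x :: "real^'n" assume "x \<in> {0} \<union> {axis i 2 | i. True} \<union> {axis i 2 + axis j 2 | i j. i \<noteq> j}"
    then consider "x = 0" | i where "x = axis i 2" | i j where "x = axis i 2 + axis j 2" "i \<noteq> j" by blast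
    then show "x \<in> zpt ` idx"
    proof cases
      case 1
      moreover have "{} \<in> (idx :: 'n set set)" by (simp add: idx_def)
      ultimately show ?thesis using z0 by (metis image_eqI)
    next
      case (2 i)
      moreover have "{i} \<in> (idx :: 'n set set)" by (simp add: idx_def)
      ultimately show ?thesis using z1 by (metis image_eqI)
    next
      case (3 i j)
      moreover have "{i,j} \<in> (idx :: 'n set set)" by (simp add: idx_def card_insert_if)
      ultimately show ?thesis using z2[of i j] by (metis image_eqI)
    qed
  next
    fix x :: "real^'n" assume "x \<in> zpt ` idx"
    then obtain U where U: "U \<in> idx" "x = zpt U" by auto
    then have "card U \<le> 2" by (simp add: idx_def)
    then consider "card U = 0" | "card U = 1" | "card U = 2" by linarith
    then show "x \<in> {0} \<union> {axis i 2 | i. True} \<union> {axis i 2 + axis j 2 | i j. i \<noteq> j}"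
    proof cases
      case 1
      then have "U = {}" using card_eq_0_iff[of U] by simp
      then show ?thesis using U z0 by simp
    next
      case 2
      then obtain i where "U = {i}" by (auto simp: card_1_singleton_iff)
      then show ?thesis using U z1 by auto
    next
      case 3
      then obtain i j where "U = {i,j}" "i \<noteq> j" by (auto simp: card_2_iff)
      then show ?thesis using U z2 by blast
    qed
  qed
qed

theorem theorem5:
  fixes \<beta> :: "'n::finite set \<Rightarrow> real"
  assumes "CARD('n) \<ge> 3"
    and "\<And>S. \<beta> S = (if card S = 1 then -1 else 0)"
  shows "locally_D_optimal \<beta> {x :: real ^ 'n. \<forall>i. 0 \<le> x $ i}
           ({0} \<union> {axis i 2 | i. True} \<union> {axis i 2 + axis j 2 | i j. i \<noteq> j})
           (\<lambda>_. 1 / (1 + real CARD('n) + real CARD('n) * (real CARD('n) - 1) / 2))"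
proof -
  note b = assms(2)
  define P where "P = 1 + real CARD('n) + real CARD('n) * (real CARD('n) - 1) / 2"
  define p where "p = card (idx :: 'n set set)"
  have Pp: "P = real p" unfolding P_def p_def by (rule card_idx[symmetric])
  have fin: "finite (idx :: 'n set set)" by simp
  have p1: "p \<ge> 1"
  proof -
    have "{} \<in> (idx :: 'n set set)" by (simp add: idx_def)
    then have "idx \<noteq> ({} :: 'n set set)" by auto
    then show ?thesis using fin by (simp add: p_def Suc_le_eq card_gt_0_iff)
  qed
  have P0: "P > 0" using Pp p1 by simp
  obtain e where e: "bij_betw e {0..<p} (idx :: 'n set set)"
    using ex_bij_betw_nat_finite[OF fin] unfolding p_def by blast
  define X where "X = {x :: real ^ 'n. \<forall>i. 0 \<le> x $ i}"
  define D0 where "D0 = zpt ` (idx :: 'n set set)"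
  define w0 where "w0 = (\<lambda>_::real^'n. 1 / P)"
  have des0: "is_design X D0 w0"
    unfolding is_design_def
  proof (intro conjI ballI)
    show "finite D0" by (simp add: D0_def)
    show "D0 \<subseteq> X" by (auto simp: D0_def X_def zpt_def)
    fix x assume "x \<in> D0" show "0 \<le> w0 x" using P0 by (simp add: w0_def)
  next
    have "sum w0 D0 = real (card D0) * (1 / P)" by (simp add: w0_def)
    also have "card D0 = p" unfolding D0_def p_def by (rule card_image[OF zpt_inj])
    finally show "sum w0 D0 = 1" using Pp P0 by simp
  qed
  have detopt: "det_on idx (info_matrix \<beta> D0 w0) =
      (Determinant.det (Fm e p))^2 * (\<Prod>a<p. intensity \<beta> (zpt (e a)) / real p)"
  proof -
    have "det_on idx (info_matrix \<beta> D0 w0) = (Determinant.det (Fm e p))^2 * Determinant.det (Nm \<beta> e p D0 w0)"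
      by (rule det_info[OF e]) (simp add: D0_def)
    also have "Nm \<beta> e p D0 w0 = Matrix.mat p p (\<lambda>(a,b). if a = b then 1 / P * intensity \<beta> (zpt (e a)) else 0)"
      unfolding D0_def w0_def by (rule Nm_opt[OF e])
    also have "Determinant.det \<dots> = (\<Prod>a<p. 1 / P * intensity \<beta> (zpt (e a)))" by (rule det_diag)
    also have "\<dots> = (\<Prod>a<p. intensity \<beta> (zpt (e a)) / real p)" using Pp by simp
    finally show ?thesis .
  qed
  have opt: "det_on idx (info_matrix \<beta> D' w') \<le> det_on idx (info_matrix \<beta> D0 w0)"
    if des: "is_design X D' w'" for D' w'
  proof -
    have D': "finite D'" "D' \<subseteq> {x. \<forall>i. 0 \<le> x$i}" "\<And>x. x \<in> D' \<Longrightarrow> w' x \<ge> 0" "sum w' D' = 1"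
      using des by (auto simp: is_design_def X_def)
    have "det_on idx (info_matrix \<beta> D' w') = (Determinant.det (Fm e p))^2 * Determinant.det (Nm \<beta> e p D' w')"
      by (rule det_info[OF e D'(1)])
    also have "\<dots> \<le> (Determinant.det (Fm e p))^2 * (\<Prod>a<p. intensity \<beta> (zpt (e a)) / real p)"
      by (intro mult_left_mono Nm_general[OF b e p1 D'(1) D'(2) D'(3) D'(4)] zero_le_power2)
    also have "\<dots> = det_on idx (info_matrix \<beta> D0 w0)" using detopt by simp
    finally show ?thesis .
  qed
  have "locally_D_optimal \<beta> X D0 w0"
    unfolding locally_D_optimal_def using des0 opt by blast
  then show ?thesis unfolding X_def D0_def w0_def P_def design_set .
qed


end
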